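(* Consider MALIQUANT. Then, $\mathcal{SG}(0)=0$ and, for all $n\in \mathbb{N}$, $\mathcal{SG}(n)=i_o(n)$.
   Context: MALIQUANT is the impartial normal-play game on the nonnegative integers where from $n$ a player moves to a nondivisor of $n$ smaller than $n$: $\mathrm{opt}(n)=\{d: 0\le d<n,\ d\nmid n\}$ (in particular $0$ is an option of every $n>0$, and $0$ has no options). $\mathcal{SG}$ denotes the Sprague-Grundy value (mex rule). $i_o:\mathbb{N}\to\mathbb{N}$ is the index of the largest odd factor: if $n=2^k(2m-1)$ then $i_o(n)=m$. *)

theory Defs
  imports Main
begin

definition mex :: "nat set \<Rightarrow> nat" where
  "mex A = (LEAST m. m \<notin> A)"

definition opt :: "nat \<Rightarrow> nat set" where
  "opt n = {d. d < n \<and> \<not> d dvd n}"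

function SG :: "nat \<Rightarrow> nat" where
  "SG n = mex ((\<lambda>d. if d < n then SG d else 0) ` opt n)"
  by auto
termination
  by (relation "measure id") auto

definition i_o :: "nat \<Rightarrow> nat" where
  "i_o n = (THE m. \<exists>k. n = 2 ^ k * (2 * m - 1) \<and> m \<ge> 1)"

end

theory Submission
  imports Defs
begin

lemma exists_2odd: "n \<ge> (1::nat) \<Longrightarrow> \<exists>k m. m \<ge> 1 \<and> n = 2 ^ k * (2 * m - 1)"
proof (induction n rule: less_induct)
  case (less n)
  show ?case
  proof (cases "even n")
    case True
    then obtain h where h: "n = 2 * h" by blast
    with less.prems have "h \<ge> 1" "h < n" by auto
    from less.IH[OF this(2) this(1)] obtain k m where "m \<ge> 1" "h = 2 ^ k * (2 * m - 1)" by blast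
    then show ?thesis using h by (intro exI[of _ "Suc k"] exI[of _ m]) auto
  next
    case False
    then obtain h where h: "n = 2 * h + 1" using oddE by blast
    then show ?thesis by (intro exI[of _ 0] exI[of _ "h+1"]) auto
  qed
qed

lemma uniq_2odd:
  assumes "2 ^ a * x = 2 ^ b * (y::nat)" "odd x" "odd y" "a \<le> b"
  shows "a = b \<and> x = y"
proof -
  have "2 ^ b = (2::nat) ^ a * 2 ^ (b - a)" using assms(4) by (simp add: power_add[symmetric])
  then have "x = 2 ^ (b - a) * y" using assms(1) by simp
  then have "b - a = 0" using assms(2) by (cases "b - a") auto
  then show ?thesis using assms(4) \<open>x = _\<close> by simp
qed

lemma uniq_2odd':
  assumes "2 ^ a * x = 2 ^ b * (y::nat)" "odd x" "odd y"
  shows "a = b \<and> x = y"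
  using uniq_2odd[OF assms] uniq_2odd[OF assms(1)[symmetric] assms(3) assms(2)]
  by (cases "a \<le> b") auto

lemma i_o_eq:
  assumes "m \<ge> 1" "n = 2 ^ k * (2 * m - 1)"
  shows "i_o n = m"
  unfolding i_o_def
proof (rule the_equality)
  show "\<exists>k. n = 2 ^ k * (2 * m - 1) \<and> 1 \<le> m" using assms by blast
next
  fix m' assume "\<exists>k. n = 2 ^ k * (2 * m' - 1) \<and> 1 \<le> m'"
  then obtain k' where k': "n = 2 ^ k' * (2 * m' - 1)" "1 \<le> m'" by blast
  have "odd (2 * m' - 1)" "odd (2 * m - 1)" using k'(2) assms(1) by presburger+
  with uniq_2odd'[of k' "2*m'-1" k "2*m-1"] k' assms show "m' = m" by auto
qed

lemma mex_eq:
  assumes "m \<notin> A" "\<And>v. v < m \<Longrightarrow> v \<in> A"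
  shows "mex A = m"
  unfolding mex_def
  by (rule Least_equality) (use assms in \<open>auto simp: not_less[symmetric]\<close>)

lemma SG0: "SG 0 = 0"
  by (simp add: opt_def mex_def)

declare SG.simps[simp del]

lemma SG_main: "n \<ge> 1 \<Longrightarrow> SG n = i_o n"
proof (induction n rule: less_induct)
  case (less n)
  obtain k m where km: "m \<ge> 1" "n = 2 ^ k * (2 * m - 1)" using exists_2odd[OF less.prems] by blast
  have io: "i_o n = m" using i_o_eq[OF km] .
  have SGd: "SG d = i_o d" if "d \<in> opt n" "d \<ge> 1" for d
    using less.IH that by (auto simp: opt_def)
  have eq: "SG n = mex (SG ` opt n)"
    by (subst SG.simps) (auto simp: opt_def intro!: arg_cong[where f=mex] image_cong)
  have opt0: "0 \<in> opt n" using less.prems by (auto simp: opt_def)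
  have notin: "m \<notin> SG ` opt n"
  proof
    assume "m \<in> SG ` opt n"
    then obtain d where d: "d \<in> opt n" "SG d = m" by blast
    show False
    proof (cases "d = 0")
      case True then show False using d km SG0 by simp
    next
      case False
      then obtain j m' where jm: "m' \<ge> 1" "d = 2 ^ j * (2 * m' - 1)" using exists_2odd[of d] by auto
      have "m' = m" using d SGd[of d] False i_o_eq[OF jm] by simp
      have "j < k"
      proof (rule ccontr)
        assume "\<not> j < k"
        then have "(2::nat) ^ k \<le> 2 ^ j" by simp
        then have "n \<le> d" using km jm \<open>m' = m\<close> by simp
        then show False using d by (simp add: opt_def)
      qed
      then have "n = d * 2 ^ (k - j)" using km jm \<open>m' = m\<close>
        by (simp add: power_add[symmetric])
      then have "d dvd n" by simp
      then show False using d by (simp add: opt_def)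
    qed
  qed
  have allin: "v \<in> SG ` opt n" if "v < m" for v
  proof (cases "v = 0")
    case True then show ?thesis using opt0 SG0 by force
  next
    case False
    have oddv: "odd (2 * v - 1)" and oddm: "odd (2 * m - 1)" using False km(1) by presburger+
    show ?thesis
    proof (cases "(2 * v - 1) dvd (2 * m - 1)")
      case False
      define d where "d = 2 ^ k * (2 * v - 1)"
      have "d < n" using \<open>v < m\<close> km \<open>v \<noteq> 0\<close> by (simp add: d_def)
      moreover have "\<not> d dvd n" using False km by (simp add: d_def)
      moreover have "SG d = v"
      proof -
        have "d \<ge> 1" using \<open>v \<noteq> 0\<close> by (simp add: d_def)
        then have "SG d = i_o d" using SGd \<open>d < n\<close> \<open>\<not> d dvd n\<close> by (simp add: opt_def)
        also have "\<dots> = v" using i_o_eq[of v d k] \<open>v \<noteq> 0\<close> d_def by simp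
        finally show ?thesis .
      qed
      ultimately show ?thesis by (force simp: opt_def)
    next
      case True
      then obtain c where c: "2 * m - 1 = (2 * v - 1) * c" by blast
      have "odd c" using c oddm by simp
      have "c \<noteq> 1"
      proof
        assume "c = 1"
        then have "2 * m - 1 = 2 * v - 1" using c by simp
        then show False using \<open>v < m\<close> \<open>v \<noteq> 0\<close> by linarith
      qed
      with \<open>odd c\<close> have "c \<ge> 3" by presburger
      then have "(2 * v - 1) * 3 \<le> (2 * v - 1) * c" by (rule mult_le_mono2)
      moreover have "2 * v - 1 > 0" using \<open>v \<noteq> 0\<close> by linarith
      ultimately have "2 * (2 * v - 1) < 2 * m - 1" using c by linarith
      define d where "d = 2 ^ Suc k * (2 * v - 1)"
      have "d = 2 ^ k * (2 * (2 * v - 1))" by (simp add: d_def)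
      also have "\<dots> < 2 ^ k * (2 * m - 1)" using \<open>2 * (2 * v - 1) < 2 * m - 1\<close> by simp
      finally have "d < n" using km by simp
      moreover have "\<not> d dvd n"
      proof
        assume "d dvd n"
        then have "2 ^ Suc k dvd n" unfolding d_def using dvd_mult_left by blast
        then have "2 ^ k * 2 dvd 2 ^ k * (2 * m - 1)" using km by (simp add: mult.commute)
        then have "2 dvd (2 * m - 1)" by (subst (asm) nat_mult_dvd_cancel_disj) simp
        then show False using oddm by simp
      qed
      moreover have "SG d = v"
      proof -
        have "d \<ge> 1" using \<open>v \<noteq> 0\<close> by (simp add: d_def)
        then have "SG d = i_o d" using SGd \<open>d < n\<close> \<open>\<not> d dvd n\<close> by (simp add: opt_def)
        also have "\<dots> = v" using i_o_eq[of v d "Suc k"] \<open>v \<noteq> 0\<close> d_def by simp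
        finally show ?thesis .
      qed
      ultimately show ?thesis by (force simp: opt_def)
    qed
  qed
  show ?case using eq io mex_eq[OF notin allin] by simp
qed

theorem mainTheorem4:
  shows "SG 0 = 0 \<and> (\<forall>n::nat. n \<ge> 1 \<longrightarrow> SG n = i_o n)"
  using SG0 SG_main by blast

end
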